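(* Let $m,n,r,t$ be positive integers and let $E(K_n)=E_1\cup\dots\cup E_t$ be a partition of the edge set of $K_n$. Let $I$ be a random subset of $[t]$ in which each element is included independently with probability $1/r$, and suppose that \[ \mathbb{P}[\chi(\mathcal{G}_I)\ge r+1]\le \frac{1}{2m}. \] Then $g(m,n)\le r$ and $G(r)\ge\min\{m,n\}+1$.
   Context: For $I\subseteq[t]$, $\mathcal{G}_I$ is the spanning subgraph of $K_n$ with edge set $\bigcup_{i\in I}E_i$; $\chi$ is chromatic number. The grid graph $\Gamma_{m,n}$ has vertex set $[m]\times[n]$, distinct vertices $(i,j),(i',j')$ adjacent iff $i=i'$ or $j=j'$. A rectangle is the induced subgraph on $\{(i,j),(i',j),(i,j'),(i',j')\}$ with $i<i'$, $j<j'$; in an edge coloring it is alternating if $\{(i,j),(i',j)\}$ and $\{(i,j'),(i',j')\}$ share a color and $\{(i,j),(i,j')\}$ and $\{(i',j),(i',j')\}$ share a color. $g(m,n)$ is the minimum $r$ for which some $r$-coloring of the edges of $\Gamma_{m,n}$ has no alternating rectangle; $G(r)$ is the minimum $n$ such that every $r$-coloring of the edges of $\Gamma_{n,n}$ has an alternating rectangle. *)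

theory Defs
  imports Complex_Main "HOL-Library.Extended_Nat"
begin

definition Kn_edges :: "nat \<Rightarrow> nat set set" where
  "Kn_edges n = {{u, v} | u v. u \<in> {1..n} \<and> v \<in> {1..n} \<and> u \<noteq> v}"

definition is_edge_partition :: "nat \<Rightarrow> nat \<Rightarrow> (nat \<Rightarrow> nat set set) \<Rightarrow> bool" where
  "is_edge_partition n t E \<longleftrightarrow>
     (\<Union>i\<in>{1..t}. E i) = Kn_edges n \<and>
     (\<forall>i\<in>{1..t}. \<forall>j\<in>{1..t}. i \<noteq> j \<longrightarrow> E i \<inter> E j = {})"

definition colorable :: "'a set \<Rightarrow> 'a set set \<Rightarrow> nat \<Rightarrow> bool" where
  "colorable V Es k \<longleftrightarrow>
     (\<exists>f :: 'a \<Rightarrow> nat. (\<forall>v\<in>V. f v < k) \<and> (\<forall>u v. {u, v} \<in> Es \<longrightarrow> u \<noteq> v \<longrightarrow> f u \<noteq> f v))"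

definition chromatic_number :: "'a set \<Rightarrow> 'a set set \<Rightarrow> nat" where
  "chromatic_number V Es = (LEAST k. colorable V Es k)"

definition GI_edges :: "(nat \<Rightarrow> nat set set) \<Rightarrow> nat set \<Rightarrow> nat set set" where
  "GI_edges E I = (\<Union>i\<in>I. E i)"

text \<open>Probability that a random subset I of [t] (each element independently with
  probability p) satisfies P, written out as a finite sum.\<close>
definition rand_subset_prob :: "nat \<Rightarrow> real \<Rightarrow> (nat set \<Rightarrow> bool) \<Rightarrow> real" where
  "rand_subset_prob t p P =
     (\<Sum>I\<in>{I. I \<subseteq> {1..t} \<and> P I}. p ^ card I * (1 - p) ^ (t - card I))"

definition grid_vertices :: "nat \<Rightarrow> nat \<Rightarrow> (nat \<times> nat) set" where
  "grid_vertices m n = {1..m} \<times> {1..n}"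

definition grid_edges :: "nat \<Rightarrow> nat \<Rightarrow> (nat \<times> nat) set set" where
  "grid_edges m n = {{x, y} | x y. x \<in> grid_vertices m n \<and> y \<in> grid_vertices m n \<and> x \<noteq> y \<and>
                                  (fst x = fst y \<or> snd x = snd y)}"

definition edge_coloring :: "nat \<Rightarrow> nat \<Rightarrow> nat \<Rightarrow> ((nat \<times> nat) set \<Rightarrow> nat) \<Rightarrow> bool" where
  "edge_coloring m n r c \<longleftrightarrow> (\<forall>e\<in>grid_edges m n. c e < r)"

definition has_alternating_rectangle :: "nat \<Rightarrow> nat \<Rightarrow> ((nat \<times> nat) set \<Rightarrow> nat) \<Rightarrow> bool" where
  "has_alternating_rectangle m n c \<longleftrightarrow>
     (\<exists>i i' j j'. 1 \<le> i \<and> i < i' \<and> i' \<le> m \<and> 1 \<le> j \<and> j < j' \<and> j' \<le> n \<and>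
        c {(i, j), (i', j)} = c {(i, j'), (i', j')} \<and>
        c {(i, j), (i, j')} = c {(i', j), (i', j')})"

definition g_fun :: "nat \<Rightarrow> nat \<Rightarrow> nat" where
  "g_fun m n = (LEAST r. \<exists>c. edge_coloring m n r c \<and> \<not> has_alternating_rectangle m n c)"

text \<open>G(r) as an extended natural (infinity if no such n exists; the minimum otherwise).\<close>
definition G_fun :: "nat \<Rightarrow> enat" where
  "G_fun r = (INF n\<in>{n. \<forall>c. edge_coloring n n r c \<longrightarrow> has_alternating_rectangle n n c}. enat n)"

end

theory Submission
  imports Defs "HOL-Library.Product_Lexorder" "HOL-Library.FuncSet"
begin

lemma count_agree:
  fixes r t :: nat
  assumes a: "a \<in> PiE {1..t} (\<lambda>_. {..<r})" and I: "I \<subseteq> {1..t}"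
  shows "card {b \<in> PiE {1..t} (\<lambda>_. {..<r}). {s\<in>{1..t}. a s = b s} = I} = (r-1)^(t - card I)"
proof -
  have eq: "{b \<in> PiE {1..t} (\<lambda>_. {..<r}). {s\<in>{1..t}. a s = b s} = I}
      = PiE {1..t} (\<lambda>s. if s \<in> I then {a s} else {..<r} - {a s})"
  proof (rule set_eqI, rule iffI)
    fix b assume b: "b \<in> {b \<in> PiE {1..t} (\<lambda>_. {..<r}). {s\<in>{1..t}. a s = b s} = I}"
    then have b1: "b \<in> PiE {1..t} (\<lambda>_. {..<r})" and b2: "{s\<in>{1..t}. a s = b s} = I" by auto
    show "b \<in> PiE {1..t} (\<lambda>s. if s \<in> I then {a s} else {..<r} - {a s})"
      using b1 b2 I by (auto simp: PiE_def Pi_def)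
  next
    fix b assume b: "b \<in> PiE {1..t} (\<lambda>s. if s \<in> I then {a s} else {..<r} - {a s})"
    have "b \<in> PiE {1..t} (\<lambda>_. {..<r})"
      using b a I by (auto simp: PiE_def Pi_def split: if_splits)
    moreover have "{s\<in>{1..t}. a s = b s} = I"
    proof
      show "{s\<in>{1..t}. a s = b s} \<subseteq> I"
        using b by (auto simp: PiE_def Pi_def split: if_splits)
      show "I \<subseteq> {s\<in>{1..t}. a s = b s}"
        using b I by (auto simp: PiE_def Pi_def split: if_splits)
    qed
    ultimately show "b \<in> {b \<in> PiE {1..t} (\<lambda>_. {..<r}). {s\<in>{1..t}. a s = b s} = I}" by auto
  qed
  have ar: "\<And>s. s \<in> {1..t} \<Longrightarrow> a s < r" using a by (auto simp: PiE_def Pi_def)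
  have "card (PiE {1..t} (\<lambda>s. if s \<in> I then {a s} else {..<r} - {a s}))
      = (\<Prod>s\<in>{1..t}. card (if s \<in> I then {a s} else {..<r} - {a s}))"
    by (rule card_PiE) auto
  also have "\<dots> = (\<Prod>s\<in>{1..t}. if s \<in> I then 1 else r - 1)"
    by (rule prod.cong) (auto simp: ar)
  also have "\<dots> = (\<Prod>s\<in>{1..t} \<inter> - I. r - 1)"
    by (simp add: prod.If_cases)
  also have "\<dots> = (r-1) ^ card ({1..t} - I)" by (simp add: Diff_eq)
  also have "card ({1..t} - I) = t - card I"
    using I by (simp add: card_Diff_subset finite_subset)
  finally show ?thesis using eq by simp
qed

lemma term_id:
  fixes r t k :: nat assumes "r > 0" "k \<le> t"
  shows "real ((r-1)^(t-k)) = real r ^ t * ((1 / real r) ^ k * (1 - 1 / real r) ^ (t - k))"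
proof -
  have r: "real r > 0" using assms by simp
  have "1 - 1 / real r = real (r-1) / real r" using assms by (simp add: of_nat_diff field_simps)
  moreover have "real r ^ t = real r ^ k * real r ^ (t - k)"
    using assms by (simp flip: power_add)
  ultimately show ?thesis using r by (simp add: power_divide field_simps)
qed

lemma count_bad:
  fixes r t :: nat
  assumes a: "a \<in> PiE {1..t} (\<lambda>_. {..<r})" and r: "r > 0"
  shows "real (card {b \<in> PiE {1..t} (\<lambda>_. {..<r}). {s\<in>{1..t}. a s = b s} \<in> {I. I \<subseteq> {1..t} \<and> P I}})
       = real r ^ t * rand_subset_prob t (1 / real r) P"
proof -
  define X where "X = PiE {1..t} (\<lambda>_. {..<r::nat})"
  define B where "B = {I. I \<subseteq> {1..t} \<and> P I}"
  define g where "g = (\<lambda>b. {s\<in>{1..t}. a s = b s})"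
  have fX: "finite X" unfolding X_def by (simp add: finite_PiE)
  have fB: "finite B" unfolding B_def by (rule finite_subset[of _ "Pow {1..t}"]) auto
  define S where "S = {b \<in> X. g b \<in> B}"
  have "card S = (\<Sum>b\<in>S. 1::nat)" by simp
  also have "\<dots> = (\<Sum>I\<in>B. \<Sum>b\<in>{b\<in>S. g b = I}. 1)"
    by (rule sum.group[symmetric]) (use fX fB in \<open>auto simp: S_def\<close>)
  also have "\<dots> = (\<Sum>I\<in>B. (r-1)^(t - card I))"
  proof (rule sum.cong)
    fix I assume I: "I \<in> B"
    have "{b\<in>S. g b = I} = {b \<in> X. g b = I}" using I by (auto simp: S_def)
    then show "(\<Sum>b\<in>{b\<in>S. g b = I}. 1) = (r-1)^(t - card I)"
      using count_agree[OF a, of I] I by (simp add: B_def X_def g_def)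
  qed simp
  finally have "real (card S) = (\<Sum>I\<in>B. real ((r-1)^(t - card I)))" by simp
  also have "\<dots> = (\<Sum>I\<in>B. real r ^ t * ((1 / real r) ^ card I * (1 - 1 / real r) ^ (t - card I)))"
  proof (rule sum.cong)
    fix I assume "I \<in> B"
    then have "card I \<le> t" unfolding B_def using card_mono[of "{1..t}" I] by auto
    then show "real ((r-1)^(t - card I)) = real r ^ t * ((1 / real r) ^ card I * (1 - 1 / real r) ^ (t - card I))"
      using term_id[OF r] by blast
  qed simp
  also have "\<dots> = real r ^ t * rand_subset_prob t (1 / real r) P"
    by (simp add: rand_subset_prob_def B_def sum_distrib_left)
  finally show ?thesis by (simp add: S_def X_def g_def B_def)
qed

lemma greedy:
  fixes r t m :: nat and B :: "nat set set"
  assumes r: "r > 0" and m: "m > 0"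
    and bnd: "\<And>a. a \<in> PiE {1..t} (\<lambda>_. {..<r}) \<Longrightarrow>
       real (card {b \<in> PiE {1..t} (\<lambda>_. {..<r}). {s\<in>{1..t}. a s = b s} \<in> B}) \<le> real r ^ t / (2 * real m)"
  shows "k \<le> m \<Longrightarrow> \<exists>xs. (\<forall>i\<in>{1..k}. xs i \<in> PiE {1..t} (\<lambda>_. {..<r})) \<and>
     (\<forall>i\<in>{1..k}. \<forall>i'\<in>{1..k}. i < i' \<longrightarrow> {s\<in>{1..t}. xs i s = xs i' s} \<notin> B)"
proof (induction k)
  case 0 then show ?case by auto
next
  case (Suc k)
  define X where "X = PiE {1..t} (\<lambda>_. {..<r::nat})"
  from Suc obtain xs where xs1: "\<forall>i\<in>{1..k}. xs i \<in> X"
    and xs2: "\<forall>i\<in>{1..k}. \<forall>i'\<in>{1..k}. i < i' \<longrightarrow> {s\<in>{1..t}. xs i s = xs i' s} \<notin> B"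
    unfolding X_def by auto
  have fX: "finite X" unfolding X_def by (simp add: finite_PiE)
  have cX: "card X = r ^ t" unfolding X_def by (simp add: card_PiE)
  define U where "U = (\<Union>i\<in>{1..k}. {b \<in> X. {s\<in>{1..t}. xs i s = b s} \<in> B})"
  have "card U \<le> (\<Sum>i\<in>{1..k}. card {b \<in> X. {s\<in>{1..t}. xs i s = b s} \<in> B})"
    unfolding U_def by (rule card_UN_le) simp
  then have "real (card U) \<le> (\<Sum>i\<in>{1..k}. real (card {b \<in> X. {s\<in>{1..t}. xs i s = b s} \<in> B}))"
    unfolding of_nat_sum[symmetric] by (rule of_nat_mono)
  also have "\<dots> \<le> (\<Sum>i\<in>{1..k}. real r ^ t / (2 * real m))"
    by (rule sum_mono) (use bnd xs1 in \<open>auto simp: X_def\<close>)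
  also have "\<dots> = real k * (real r ^ t / (2 * real m))" by simp
  also have "\<dots> < real r ^ t"
  proof -
    have "real k < 2 * real m" using Suc.prems by simp
    moreover have "real r ^ t > 0" using r by simp
    moreover have "real k / (2 * real m) < 1" using \<open>real k < 2 * real m\<close> m by simp
    ultimately have "(real k / (2 * real m)) * real r ^ t < 1 * real r ^ t"
      by (intro mult_strict_right_mono) auto
    then show ?thesis by simp
  qed
  finally have "card U < card X" using cX by simp
  moreover have "finite U" using fX by (rule finite_subset[rotated]) (auto simp: U_def)
  ultimately have "\<not> X \<subseteq> U" using card_mono[of U X] by linarith
  then obtain b where b: "b \<in> X" "b \<notin> U" by auto
  define ys where "ys = xs(Suc k := b)"
  have "\<forall>i\<in>{1..Suc k}. ys i \<in> X" using xs1 b by (auto simp: ys_def)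
  moreover have "\<forall>i\<in>{1..Suc k}. \<forall>i'\<in>{1..Suc k}. i < i' \<longrightarrow> {s\<in>{1..t}. ys i s = ys i' s} \<notin> B"
  proof (intro ballI impI)
    fix i i' assume i: "i \<in> {1..Suc k}" and i': "i' \<in> {1..Suc k}" and lt: "i < i'"
    show "{s\<in>{1..t}. ys i s = ys i' s} \<notin> B"
    proof (cases "i' = Suc k")
      case True
      then have "i \<in> {1..k}" using i lt by auto
      then show ?thesis using b True lt by (auto simp: ys_def U_def)
    next
      case False
      then show ?thesis using xs2 i i' lt by (auto simp: ys_def)
    qed
  qed
  ultimately show ?case unfolding X_def by blast
qed

lemma Kn_edge_mem:
  assumes "{u, v} \<in> Kn_edges n"
  shows "u \<in> {1..n} \<and> v \<in> {1..n}"
  using assms unfolding Kn_edges_def by (auto simp: doubleton_eq_iff)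

lemma colorable_le:
  assumes part: "is_edge_partition n t E" and I: "I \<subseteq> {1..t}"
    and chi: "chromatic_number {1..n} (GI_edges E I) \<le> r"
  shows "colorable {1..n} (GI_edges E I) r"
proof -
  have sub: "GI_edges E I \<subseteq> Kn_edges n"
    using part I unfolding is_edge_partition_def GI_edges_def by blast
  have "colorable {1..n} (GI_edges E I) n"
    unfolding colorable_def
  proof (intro exI[of _ "\<lambda>v. v - 1"] conjI allI impI ballI)
    fix v assume "v \<in> {1..n}" then show "v - 1 < n" by auto
  next
    fix u v assume "{u, v} \<in> GI_edges E I" "u \<noteq> v"
    then have "u \<in> {1..n} \<and> v \<in> {1..n}" using sub Kn_edge_mem by blast
    then show "u - 1 \<noteq> v - 1" using \<open>u \<noteq> v\<close> by auto
  qed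
  then have "colorable {1..n} (GI_edges E I) (chromatic_number {1..n} (GI_edges E I))"
    unfolding chromatic_number_def by (rule LeastI)
  then show ?thesis using chi unfolding colorable_def by (meson order_less_le_trans)
qed

lemma crow: "j < (j'::nat) \<Longrightarrow> Min {(i::nat,j),(i,j')} = (i,j) \<and> Max {(i::nat,j),(i,j')} = (i,j')"
  by (auto simp: min_def max_def less_eq_prod_def)
lemma ccol: "i < (i'::nat) \<Longrightarrow> Min {(i,j::nat),(i',j)} = (i,j) \<and> Max {(i,j::nat),(i',j)} = (i',j)"
  by (auto simp: min_def max_def less_eq_prod_def)

theorem lemma3p2:
  fixes m n r t :: nat and E :: "nat \<Rightarrow> nat set set"
  assumes "m > 0" "n > 0" "r > 0" "t > 0"
    and "is_edge_partition n t E"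
    and "rand_subset_prob t (1 / real r)
           (\<lambda>I. chromatic_number {1..n} (GI_edges E I) \<ge> r + 1) \<le> 1 / (2 * real m)"
  shows "g_fun m n \<le> r \<and> G_fun r \<ge> enat (min m n + 1)"
proof -
  note m = assms(1) and r = assms(3) and part = assms(5) and prob = assms(6)
  define X where "X = PiE {1..t} (\<lambda>_. {..<r::nat})"
  define P where "P = (\<lambda>I. chromatic_number {1..n} (GI_edges E I) \<ge> r + 1)"
  define Bad where "Bad = {I. I \<subseteq> {1..t} \<and> P I}"
  have bnd: "real (card {b \<in> X. {s\<in>{1..t}. a s = b s} \<in> Bad}) \<le> real r ^ t / (2 * real m)"
    if a: "a \<in> X" for a
  proof -
    have "real (card {b \<in> X. {s\<in>{1..t}. a s = b s} \<in> Bad}) = real r ^ t * rand_subset_prob t (1 / real r) P"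
      using count_bad[of a t r P] a r by (simp add: X_def Bad_def)
    also have "\<dots> \<le> real r ^ t * (1 / (2 * real m))"
      using prob by (intro mult_left_mono) (auto simp: P_def)
    finally show ?thesis by simp
  qed
  obtain xs where xs1: "\<forall>i\<in>{1..m}. xs i \<in> X"
    and xs2: "\<forall>i\<in>{1..m}. \<forall>i'\<in>{1..m}. i < i' \<longrightarrow> {s\<in>{1..t}. xs i s = xs i' s} \<notin> Bad"
    using greedy[OF r m, of t Bad m] bnd unfolding X_def by blast
  define agree where "agree = (\<lambda>i i'. {s\<in>{1..t}. xs i s = xs i' s})"
  define part_of where "part_of = (\<lambda>j j'. SOME s. s \<in> {1..t} \<and> {j, j'} \<in> E s)"
  define phi where "phi = (\<lambda>i i'. SOME f :: nat \<Rightarrow> nat. (\<forall>v\<in>{1..n}. f v < r) \<and>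
      (\<forall>u v. {u, v} \<in> GI_edges E (agree i i') \<longrightarrow> u \<noteq> v \<longrightarrow> f u \<noteq> f v))"
  define c where "c = (\<lambda>e :: (nat \<times> nat) set. let a = Min e; b = Max e in
      if fst a = fst b then xs (fst a) (part_of (snd a) (snd b)) else phi (fst a) (fst b) (snd a))"
  have part_ok: "part_of j j' \<in> {1..t} \<and> {j, j'} \<in> E (part_of j j')"
    if "j \<in> {1..n}" "j' \<in> {1..n}" "j \<noteq> j'" for j j'
  proof -
    have "{j, j'} \<in> Kn_edges n" using that unfolding Kn_edges_def by blast
    then have "\<exists>s. s \<in> {1..t} \<and> {j, j'} \<in> E s" using part unfolding is_edge_partition_def by blast
    then show ?thesis unfolding part_of_def by (rule someI_ex)
  qed
  have phi_ok: "(\<forall>v\<in>{1..n}. phi i i' v < r) \<and>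
      (\<forall>u v. {u, v} \<in> GI_edges E (agree i i') \<longrightarrow> u \<noteq> v \<longrightarrow> phi i i' u \<noteq> phi i i' v)"
    if "i \<in> {1..m}" "i' \<in> {1..m}" "i < i'" for i i'
  proof -
    have nb: "agree i i' \<notin> Bad" using xs2 that unfolding agree_def by blast
    have sub: "agree i i' \<subseteq> {1..t}" unfolding agree_def by blast
    then have "\<not> P (agree i i')" using nb unfolding Bad_def by blast
    then have "chromatic_number {1..n} (GI_edges E (agree i i')) \<le> r" unfolding P_def by simp
    then have "colorable {1..n} (GI_edges E (agree i i')) r" using colorable_le[OF part sub] by blast
    then show ?thesis unfolding colorable_def phi_def by (rule someI_ex)
  qed
  have c_row: "c {(i,j),(i,j')} = xs i (part_of j j')" if "j < j'" for i j j'
    using crow[OF that, of i] by (simp add: c_def Let_def)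
  have c_col: "c {(i,j),(i',j)} = phi i i' j" if "i < i'" for i i' j
    using ccol[OF that, of j] that by (simp add: c_def Let_def)
  have noalt: "\<not> has_alternating_rectangle m n c"
  proof
    assume "has_alternating_rectangle m n c"
    then obtain i i' j j' where rng: "1 \<le> i" "i < i'" "i' \<le> m" "1 \<le> j" "j < j'" "j' \<le> n"
      and e1: "c {(i, j), (i', j)} = c {(i, j'), (i', j')}"
      and e2: "c {(i, j), (i, j')} = c {(i', j), (i', j')}"
      unfolding has_alternating_rectangle_def by blast
    define p where "p = part_of j j'"
    have p: "p \<in> {1..t}" "{j, j'} \<in> E p" using part_ok[of j j'] rng unfolding p_def by auto
    have "xs i p = xs i' p" using e2 c_row[OF rng(5)] unfolding p_def by simp
    then have "p \<in> agree i i'" using p unfolding agree_def by simp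
    then have "{j, j'} \<in> GI_edges E (agree i i')" using p unfolding GI_edges_def by blast
    then have "phi i i' j \<noteq> phi i i' j'"
      using phi_ok[of i i'] rng by auto
    moreover have "phi i i' j = phi i i' j'" using e1 c_col[OF rng(2)] by simp
    ultimately show False by simp
  qed
  have ecol: "edge_coloring m n r c"
    unfolding edge_coloring_def
  proof
    fix e assume "e \<in> grid_edges m n"
    then obtain x y where e: "e = {x, y}" and xv: "x \<in> grid_vertices m n" and yv: "y \<in> grid_vertices m n"
      and xy: "x \<noteq> y" and fs: "fst x = fst y \<or> snd x = snd y"
      unfolding grid_edges_def by blast
    obtain a b where x: "x = (a, b)" by (cases x)
    obtain a' b' where y: "y = (a', b')" by (cases y)
    have rg: "a \<in> {1..m}" "b \<in> {1..n}" "a' \<in> {1..m}" "b' \<in> {1..n}"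
      using xv yv x y unfolding grid_vertices_def by auto
    show "c e < r"
    proof (cases "a = a'")
      case True
      then have bb: "b \<noteq> b'" using xy x y by simp
      have rowc: "c {(a, j), (a, j')} < r" if "j < j'" "j \<in> {1..n}" "j' \<in> {1..n}" for j j'
      proof -
        have "part_of j j' \<in> {1..t}" using part_ok[of j j'] that by auto
        moreover have "xs a \<in> X" using xs1 rg by blast
        ultimately show ?thesis using c_row[OF that(1), of a] unfolding X_def by (auto simp: PiE_def Pi_def)
      qed
      show ?thesis
      proof (cases "b < b'")
        case True then show ?thesis using rowc[of b b'] e x y \<open>a = a'\<close> rg by simp
      next
        case False then have "b' < b" using bb by simp
        then show ?thesis using rowc[of b' b] e x y \<open>a = a'\<close> rg by (simp add: insert_commute)
      qed
    next
      case False
      then have bb: "b = b'" using fs x y by simp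
      have colc: "c {(i, b), (i', b)} < r" if "i < i'" "i \<in> {1..m}" "i' \<in> {1..m}" for i i'
        using c_col[OF that(1), of b] phi_ok[OF that(2,3,1)] rg by auto
      show ?thesis
      proof (cases "a < a'")
        case True then show ?thesis using colc[of a a'] e x y bb rg by simp
      next
        case False then have "a' < a" using \<open>a \<noteq> a'\<close> by simp
        then show ?thesis using colc[of a' a] e x y bb rg by (simp add: insert_commute)
      qed
    qed
  qed
  have g: "g_fun m n \<le> r"
    unfolding g_fun_def by (rule Least_le) (use ecol noalt in blast)
  have G: "G_fun r \<ge> enat (min m n + 1)"
    unfolding G_fun_def
  proof (rule INF_greatest)
    fix k assume k: "k \<in> {n'. \<forall>c. edge_coloring n' n' r c \<longrightarrow> has_alternating_rectangle n' n' c}"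
    show "enat (min m n + 1) \<le> enat k"
    proof (rule ccontr)
      assume "\<not> enat (min m n + 1) \<le> enat k"
      then have km: "k \<le> m" "k \<le> n" by auto
      have "edge_coloring k k r c"
      proof -
        have "grid_vertices k k \<subseteq> grid_vertices m n"
          using km unfolding grid_vertices_def by auto
        then have "grid_edges k k \<subseteq> grid_edges m n"
          unfolding grid_edges_def by blast
        then show ?thesis using ecol unfolding edge_coloring_def by blast
      qed
      then have "has_alternating_rectangle k k c" using k by blast
      then have "has_alternating_rectangle m n c"
        using km unfolding has_alternating_rectangle_def by (meson le_trans)
      then show False using noalt by simp
    qed
  qed
  show ?thesis using g G by simp
qed

end
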